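(* Let $n\ge 3$ and $1\le k<\frac{n}{2}$ be integers. The co-spectrum of the generalized Petersen graph $P(n,k)$ is exactly $\{3,4,5,\dots,n+2\}$; that is, for every integer $s$ with $3\le s\le n+2$, $P(n,k)$ has a bond of size exactly $s$, and every bond of $P(n,k)$ has size in $\{3,\dots,n+2\}$.
   Context: The generalized Petersen graph $P(n,k)$, for $n\ge 3$ and $1\le k<\frac n2$, has vertex set $\{x_1,\dots,x_n,y_1,\dots,y_n\}$ and edge set $\{x_ix_{i+1},\ x_iy_i,\ y_iy_{i+k} : i=1,\dots,n\}$, with subscripts read modulo $n$. A bond of a graph is a minimal nonempty edge-cut; equivalently, for a connected graph $G$, it is the set of edges $[X,Y]$ between the parts of a partition $V(G)=X\cup Y$ ($X,Y$ nonempty) such that $G[X]$ and $G[Y]$ are both connected. The co-spectrum of a graph is the set of all sizes of its bonds. *)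

theory Defs
  imports Main
begin

text \<open>Vertices of the generalized Petersen graph: (False, i) is x_(i+1), (True, i) is y_(i+1),
  for i in {0..<n} (0-based indices, subscripts modulo n).\<close>

definition gp_vertices :: "nat \<Rightarrow> (bool \<times> nat) set" where
  "gp_vertices n = UNIV \<times> {0..<n}"

definition gp_edges :: "nat \<Rightarrow> nat \<Rightarrow> (bool \<times> nat) set set" where
  "gp_edges n k =
     (\<Union>i\<in>{0..<n}. {{(False, i), (False, (i + 1) mod n)},
                   {(False, i), (True, i)},
                   {(True, i), (True, (i + k) mod n)}})"

definition induced_connected :: "'a set set \<Rightarrow> 'a set \<Rightarrow> bool" where
  "induced_connected E X \<longleftrightarrow> X \<noteq> {} \<and>
     (\<forall>u\<in>X. \<forall>v\<in>X. (u, v) \<in> {(a, b). {a, b} \<in> E \<and> a \<in> X \<and> b \<in> X}\<^sup>*)"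

definition edge_cut :: "'a set set \<Rightarrow> 'a set \<Rightarrow> 'a set \<Rightarrow> 'a set set" where
  "edge_cut E X Y = {e \<in> E. \<exists>a\<in>X. \<exists>b\<in>Y. e = {a, b}}"

definition is_bond :: "'a set \<Rightarrow> 'a set set \<Rightarrow> 'a set set \<Rightarrow> bool" where
  "is_bond V E B \<longleftrightarrow> (\<exists>X Y. X \<noteq> {} \<and> Y \<noteq> {} \<and> X \<union> Y = V \<and> X \<inter> Y = {} \<and>
      induced_connected E X \<and> induced_connected E Y \<and> B = edge_cut E X Y)"

definition co_spectrum :: "'a set \<Rightarrow> 'a set set \<Rightarrow> nat set" where
  "co_spectrum V E = {card B | B. is_bond V E B}"

end

theory Submission
  imports Defs
begin

definition ir :: "'a set set \<Rightarrow> 'a set \<Rightarrow> ('a \<times> 'a) set" where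
  "ir E X = {(a, b). {a, b} \<in> E \<and> a \<in> X \<and> b \<in> X}"

lemma ic_iff: "induced_connected E X \<longleftrightarrow> X \<noteq> {} \<and> (\<forall>u\<in>X. \<forall>v\<in>X. (u, v) \<in> (ir E X)\<^sup>*)"
  by (simp add: induced_connected_def ir_def)

lemma conn_edges:
  assumes fin: "finite E" and fX: "finite X" and c: "induced_connected E X"
  shows "card X \<le> card {e\<in>E. e \<subseteq> X} + 1"
proof -
  let ?R = "ir E X"
  from c obtain r where r: "r \<in> X" unfolding induced_connected_def by auto
  have reach: "\<exists>m. (v,r) \<in> ?R^^m" if "v \<in> X" for v
  proof -
    have "(v,r) \<in> ?R\<^sup>*" using c r that unfolding ic_iff by blast
    then show ?thesis using rtrancl_power by blast
  qed
  define d where "d v = (LEAST m. (v,r) \<in> ?R^^m)" for v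
  have dI: "v\<in>X \<Longrightarrow> (v,r) \<in> ?R^^(d v)" for v using reach unfolding d_def by (meson LeastI_ex)
  have dle: "(v,r) \<in> ?R^^m \<Longrightarrow> d v \<le> m" for v m by (simp add: d_def Least_le)
  have d0: "d v \<noteq> 0" if v: "v \<in> X - {r}" for v
  proof
    assume "d v = 0"
    with dI[of v] v show False by simp
  qed
  have step: "\<exists>w. (v,w) \<in> ?R \<and> (w,r) \<in> ?R^^(d v - 1)" if v: "v \<in> X - {r}" for v
  proof -
    have "(v,r) \<in> ?R^^(Suc (d v - 1))" using dI[of v] v d0[OF v] by simp
    then show ?thesis by (rule relpow_Suc_D2)
  qed
  define g where "g v = (SOME w. (v,w) \<in> ?R \<and> (w,r) \<in> ?R^^(d v - 1))" for v
  have g: "(v, g v) \<in> ?R \<and> (g v, r) \<in> ?R^^(d v - 1)" if v: "v \<in> X - {r}" for v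
    using step[OF v] unfolding g_def by (rule someI_ex)
  have gd: "d (g v) < d v" if v: "v \<in> X - {r}" for v
  proof -
    have "d (g v) \<le> d v - 1" using g[OF v] dle by blast
    then show ?thesis using d0[OF v] by arith
  qed
  have inj: "inj_on (\<lambda>v. {v, g v}) (X - {r})"
  proof (rule inj_onI)
    fix u v assume u: "u \<in> X - {r}" and v: "v \<in> X - {r}" and eq: "{u, g u} = {v, g v}"
    show "u = v"
    proof (rule ccontr)
      assume "u \<noteq> v"
      with eq have "u = g v" "v = g u" by (auto simp: doubleton_eq_iff)
      then have "d v < d u" "d u < d v" using gd[OF u] gd[OF v] by auto
      then show False by simp
    qed
  qed
  have sub: "(\<lambda>v. {v, g v}) ` (X - {r}) \<subseteq> {e\<in>E. e \<subseteq> X}"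
  proof
    fix e assume "e \<in> (\<lambda>v. {v, g v}) ` (X - {r})"
    then obtain v where v: "v \<in> X - {r}" and e: "e = {v, g v}" by blast
    have "(v, g v) \<in> ?R" using g[OF v] by blast
    then show "e \<in> {e\<in>E. e \<subseteq> X}" unfolding e ir_def by simp
  qed
  have "card (X - {r}) \<le> card {e\<in>E. e\<subseteq>X}" using card_inj_on_le[OF inj sub] fin by simp
  then show ?thesis using fX r by (simp add: card_Diff_singleton)
qed

lemma conn_intro:
  assumes "r \<in> X" and h: "\<And>u. u\<in>X \<Longrightarrow> (u,r) \<in> (ir E X)\<^sup>*"
  shows "induced_connected E X"
proof -
  have sym: "(ir E X)\<inverse> = ir E X" unfolding ir_def by (auto simp: insert_commute)
  have "(r,v) \<in> (ir E X)\<^sup>*" if "v \<in> X" for v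
  proof -
    have "(v,r) \<in> ((ir E X)\<inverse>)\<^sup>*" using h[OF that] sym by simp
    then show ?thesis by (simp add: rtrancl_converse)
  qed
  then show ?thesis using assms unfolding ic_iff by (blast intro: rtrancl_trans)
qed

lemma cut_mem:
  assumes "X \<union> Y = V" "X \<inter> Y = {}" "u \<in> V" "v \<in> V"
  shows "{u,v} \<in> edge_cut E X Y \<longleftrightarrow> {u,v} \<in> E \<and> (u \<in> X \<longleftrightarrow> v \<notin> X)"
  unfolding edge_cut_def using assms by (auto simp: doubleton_eq_iff)

definition ea :: "nat \<Rightarrow> nat \<Rightarrow> bool \<times> nat" where
  "ea c i = (if c = 2 then (True, i) else (False, i))"
definition eb :: "nat \<Rightarrow> nat \<Rightarrow> nat \<Rightarrow> nat \<Rightarrow> bool \<times> nat" where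
  "eb n k c i = (if c = 0 then (False, (i+1) mod n) else if c = 1 then (True, i) else (True, (i+k) mod n))"
definition lab :: "nat \<Rightarrow> nat \<Rightarrow> nat \<times> nat \<Rightarrow> (bool \<times> nat) set" where
  "lab n k p = {ea (fst p) (snd p), eb n k (fst p) (snd p)}"

lemma mod2: "a < 2*n \<Longrightarrow> (a::nat) mod n = (if a < n then a else a - n)"
  by (simp add: le_mod_geq)

lemma gp_edges_lab: "gp_edges n k = lab n k ` ({0..<3} \<times> {0..<n})"
proof
  show "gp_edges n k \<subseteq> lab n k ` ({0..<3} \<times> {0..<n})"
  proof
    fix e assume "e \<in> gp_edges n k"
    then obtain i where i: "i < n" and "e = lab n k (0,i) \<or> e = lab n k (1,i) \<or> e = lab n k (2,i)"
      unfolding gp_edges_def lab_def ea_def eb_def by auto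
    then show "e \<in> lab n k ` ({0..<3} \<times> {0..<n})" by force
  qed
next
  show "lab n k ` ({0..<3} \<times> {0..<n}) \<subseteq> gp_edges n k"
  proof
    fix e assume "e \<in> lab n k ` ({0..<3} \<times> {0..<n})"
    then obtain c i where c: "c < 3" and i: "i < n" and e: "e = lab n k (c,i)" by auto
    from c have "c = 0 \<or> c = 1 \<or> c = 2" by auto
    then show "e \<in> gp_edges n k"
    proof (elim disjE)
      assume "c = 0" then show ?thesis unfolding e gp_edges_def lab_def ea_def eb_def
        apply - apply (rule UN_I[where a=i]) using i by auto
    next
      assume "c = 1" then show ?thesis unfolding e gp_edges_def lab_def ea_def eb_def
        apply - apply (rule UN_I[where a=i]) using i by auto
    next
      assume "c = 2" then show ?thesis unfolding e gp_edges_def lab_def ea_def eb_def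
        apply - apply (rule UN_I[where a=i]) using i by auto
    qed
  qed
qed

lemma swap1: assumes "3 \<le> (n::nat)" "i < n" "j < n" "i = (j+1) mod n" "j = (i+1) mod n" shows False
proof -
  have a: "(j+1) mod n = (if j + 1 < n then j + 1 else j + 1 - n)" by (rule mod2) (use assms in arith)
  have b: "(i+1) mod n = (if i + 1 < n then i + 1 else i + 1 - n)" by (rule mod2) (use assms in arith)
  have x: "(j + 1 < n \<longrightarrow> i = j + 1) \<and> (\<not> j + 1 < n \<longrightarrow> i = j + 1 - n)" using assms(4) a by simp
  have y: "(i + 1 < n \<longrightarrow> j = i + 1) \<and> (\<not> i + 1 < n \<longrightarrow> j = i + 1 - n)" using assms(5) b by simp
  have x': "i = j + 1 \<or> i + n = j + 1" using x by auto
  have y': "j = i + 1 \<or> j + n = i + 1" using y by auto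
  show False using x' y' assms(1,2,3) by arith
qed

lemma swapk: assumes "1 \<le> (k::nat)" "2*k < n" "i < n" "j < n" "i = (j+k) mod n" "j = (i+k) mod n" shows False
proof -
  have a: "(j+k) mod n = (if j + k < n then j + k else j + k - n)" by (rule mod2) (use assms in arith)
  have b: "(i+k) mod n = (if i + k < n then i + k else i + k - n)" by (rule mod2) (use assms in arith)
  have x: "(j + k < n \<longrightarrow> i = j + k) \<and> (\<not> j + k < n \<longrightarrow> i = j + k - n)" using assms(5) a by simp
  have y: "(i + k < n \<longrightarrow> j = i + k) \<and> (\<not> i + k < n \<longrightarrow> j = i + k - n)" using assms(6) b by simp
  have x': "i = j + k \<or> i + n = j + k" using x by auto
  have y': "j = i + k \<or> j + n = i + k" using y by auto
  show False using x' y' assms(1,2,3,4) by arith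
qed

lemma modk: "(k::nat) < n \<Longrightarrow> i < n \<Longrightarrow> (i+k) mod n = (if i + k < n then i + k else i + k - n)"
  by (rule mod2) arith

lemma modne: assumes "1 \<le> (k::nat)" "k < n" "i < n" shows "(i+k) mod n \<noteq> i"
  using modk[OF assms(2,3)] assms by (cases "i + k < n") auto

lemma lab_inj:
  assumes n: "3 \<le> n" and k: "1 \<le> k" "2*k < n"
  shows "inj_on (lab n k) ({0..<3} \<times> {0..<n})"
proof (rule inj_onI)
  fix p q assume p: "p \<in> {0..<3} \<times> {0..<n}" and q: "q \<in> {0..<3} \<times> {0..<n}" and eq: "lab n k p = lab n k q"
  obtain c i where pc: "p = (c,i)" by force
  obtain d j where qd: "q = (d,j)" by force
  have ci: "c < 3" "i < n" "d < 3" "j < n" using p q pc qd by auto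
  have e: "{ea c i, eb n k c i} = {ea d j, eb n k d j}" using eq pc qd by (simp add: lab_def)
  have cd: "c = d"
  proof (rule ccontr)
    assume ne: "c \<noteq> d"
    let ?A = "ea c i" and ?B = "eb n k c i" and ?C = "ea d j" and ?D = "eb n k d j"
    have "(fst ?A \<and> fst ?B) = (c = 2)" "(fst ?A \<or> fst ?B) = (c \<noteq> 0)"
         "(fst ?C \<and> fst ?D) = (d = 2)" "(fst ?C \<or> fst ?D) = (d \<noteq> 0)"
      using ci by (auto simp: ea_def eb_def)
    moreover have "(?A = ?C \<and> ?B = ?D) \<or> (?A = ?D \<and> ?B = ?C)" using e by (simp add: doubleton_eq_iff)
    then have "(fst ?A \<and> fst ?B) = (fst ?C \<and> fst ?D) \<and> (fst ?A \<or> fst ?B) = (fst ?C \<or> fst ?D)" by auto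
    ultimately have "(c = 2) = (d = 2) \<and> (c = 0) = (d = 0)" by blast
    then show False using ne ci by arith
  qed
  have "i = j"
  proof -
    have "c = 0 \<or> c = 1 \<or> c = 2" using ci by auto
    then show ?thesis
    proof (elim disjE)
      assume c0: "c = 0"
      then have "{(False,i),(False,(i+1) mod n)} = {(False,j),(False,(j+1) mod n)}" using e cd by (simp add: ea_def eb_def)
      then have "i = j \<or> (i = (j+1) mod n \<and> j = (i+1) mod n)" by (auto simp: doubleton_eq_iff)
      then show ?thesis using swap1[OF n ci(2,4)] by blast
    next
      assume c1: "c = 1"
      then show ?thesis using e cd by (simp add: ea_def eb_def doubleton_eq_iff)
    next
      assume c2: "c = 2"
      then have "{(True,i),(True,(i+k) mod n)} = {(True,j),(True,(j+k) mod n)}" using e cd by (simp add: ea_def eb_def)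
      then have "i = j \<or> (i = (j+k) mod n \<and> j = (i+k) mod n)" by (auto simp: doubleton_eq_iff)
      then show ?thesis using swapk[OF k ci(2,4)] by blast
    qed
  qed
  then have "c = d \<and> i = j" using cd by simp
  then show "p = q" using pc qd by simp
qed

lemma fin_E: "finite (gp_edges n k)"
  by (simp add: gp_edges_lab)

lemma card_E: "card (gp_edges n k) \<le> 3 * n"
  unfolding gp_edges_lab by (rule order_trans[OF card_image_le]) auto

lemma lab_in: "c < 3 \<Longrightarrow> i < n \<Longrightarrow> lab n k (c,i) \<in> gp_edges n k"
  by (auto simp: gp_edges_lab)

lemma ends_in: "c < 3 \<Longrightarrow> i < n \<Longrightarrow> ea c i \<in> gp_vertices n \<and> eb n k c i \<in> gp_vertices n"
  by (auto simp: ea_def eb_def gp_vertices_def)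

lemma lab_cut:
  assumes "X \<union> Y = gp_vertices n" "X \<inter> Y = {}" "c < 3" "i < n"
  shows "lab n k (c,i) \<in> edge_cut (gp_edges n k) X Y \<longleftrightarrow> (ea c i \<in> X \<longleftrightarrow> eb n k c i \<notin> X)"
  using cut_mem[OF assms(1,2) conjunct1[OF ends_in[OF assms(3,4)]] conjunct2[OF ends_in[OF assms(3,4)]]]
    lab_in[OF assms(3,4)]
  by (simp add: lab_def)

lemma empty_notin: "{} \<notin> gp_edges n k"
  unfolding gp_edges_def by auto

lemma card_V: "card (gp_vertices n) = 2 * n"
  unfolding gp_vertices_def by (simp add: card_cartesian_product)

lemma fin_V: "finite (gp_vertices n)"
  unfolding gp_vertices_def by simp

lemma upper:
  assumes XY: "X \<union> Y = gp_vertices n" "X \<inter> Y = {}"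
    and cX: "induced_connected (gp_edges n k) X" and cY: "induced_connected (gp_edges n k) Y"
  shows "card (edge_cut (gp_edges n k) X Y) \<le> n + 2"
proof -
  let ?E = "gp_edges n k"
  let ?B = "edge_cut ?E X Y" and ?EX = "{e\<in>?E. e \<subseteq> X}" and ?EY = "{e\<in>?E. e \<subseteq> Y}"
  have fX: "finite X" and fY: "finite Y" using XY fin_V by (metis finite_Un)+
  have cXY: "card X + card Y = 2 * n" using card_Un_disjoint[OF fX fY XY(2)] XY(1) card_V by simp
  have sub: "?B \<union> ?EX \<union> ?EY \<subseteq> ?E" unfolding edge_cut_def by auto
  have d1: "?B \<inter> ?EX = {}" using XY(2) unfolding edge_cut_def by auto
  have d2: "?B \<inter> ?EY = {}" using XY(2) unfolding edge_cut_def by auto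
  have d3: "?EX \<inter> ?EY = {}"
  proof (rule ccontr)
    assume "?EX \<inter> ?EY \<noteq> {}"
    then obtain e where "e \<in> ?E" "e \<subseteq> X" "e \<subseteq> Y" by blast
    then have "e = {}" "e \<in> ?E" using XY(2) by auto
    then show False using empty_notin by metis
  qed
  have fin: "finite ?B" "finite ?EX" "finite ?EY" using fin_E[of n k] unfolding edge_cut_def by auto
  have "card (?B \<union> ?EX \<union> ?EY) = card ?B + card ?EX + card ?EY"
    using fin d1 d2 d3 by (simp add: card_Un_disjoint Int_Un_distrib2)
  moreover have "card (?B \<union> ?EX \<union> ?EY) \<le> 3 * n"
    using card_mono[OF fin_E sub] card_E[of n k] by simp
  moreover have "card X \<le> card ?EX + 1" by (rule conn_edges[OF fin_E fX cX])
  moreover have "card Y \<le> card ?EY + 1" by (rule conn_edges[OF fin_E fY cY])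
  ultimately show ?thesis using cXY by linarith
qed

lemma three_pairs:
  assumes nk: "3 \<le> n" "1 \<le> k" "2*k < n"
    and p: "p1 \<in> {0..<3} \<times> {0..<n}" "p2 \<in> {0..<3} \<times> {0..<n}" "p3 \<in> {0..<3} \<times> {0..<n}"
    and d: "p1 \<noteq> p2" "p1 \<noteq> p3" "p2 \<noteq> p3"
    and b: "lab n k p1 \<in> edge_cut (gp_edges n k) X Y" "lab n k p2 \<in> edge_cut (gp_edges n k) X Y"
           "lab n k p3 \<in> edge_cut (gp_edges n k) X Y"
  shows "3 \<le> card (edge_cut (gp_edges n k) X Y)"
proof -
  have inj: "inj_on (lab n k) ({0..<3} \<times> {0..<n})" by (rule lab_inj[OF nk])
  have ne: "lab n k p1 \<noteq> lab n k p2" "lab n k p1 \<noteq> lab n k p3" "lab n k p2 \<noteq> lab n k p3"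
    using inj p d by (meson inj_on_contraD)+
  have fin: "finite (edge_cut (gp_edges n k) X Y)" using fin_E[of n k] unfolding edge_cut_def by auto
  have "card {lab n k p1, lab n k p2, lab n k p3} = 3" using ne by simp
  moreover have "{lab n k p1, lab n k p2, lab n k p3} \<subseteq> edge_cut (gp_edges n k) X Y" using b by simp
  ultimately show ?thesis using card_mono[OF fin] by metis
qed

lemma mod_back: assumes "k < (n::nat)" "j < n" shows "((j + (n - k)) mod n + k) mod n = j"
proof -
  have "((j + (n - k)) mod n + k) mod n = (j + (n - k) + k) mod n" by (simp add: mod_add_left_eq)
  also have "j + (n - k) + k = j + n" using assms by simp
  finally show ?thesis using assms by simp
qed

lemma caseA:
  assumes nk: "3 \<le> n" "1 \<le> k" "2*k < n"
    and XY: "X \<union> Y = gp_vertices n" "X \<inter> Y = {}" and Yne: "Y \<noteq> {}"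
    and allX: "\<forall>i<n. (False, i) \<in> X"
  shows "3 \<le> card (edge_cut (gp_edges n k) X Y)"
proof -
  obtain v where v: "v \<in> Y" using Yne by blast
  obtain b j where vb: "v = (b, j)" by force
  have "v \<in> gp_vertices n" using v XY(1) by blast
  then have j: "j < n" using vb unfolding gp_vertices_def by auto
  have b: "b = True" using v vb allX j XY(2) by (cases b) auto
  have yj: "(True, j) \<notin> X" using v vb b XY(2) by auto
  define p where "p = (j + k) mod n"
  define q where "q = (j + (n - k)) mod n"
  have kn: "k < n" using nk by simp
  have pn: "p < n" "q < n" using nk unfolding p_def q_def by auto
  have qk: "(q + k) mod n = j" unfolding q_def by (rule mod_back[OF kn j])
  have pj: "p \<noteq> j" unfolding p_def by (rule modne) (use nk j in auto)
  have qj: "q \<noteq> j" unfolding q_def by (rule modne) (use nk j in auto)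
  have pq: "p \<noteq> q"
  proof -
    have "p = (if j + k < n then j + k else j + k - n)" unfolding p_def by (rule modk[OF kn j])
    moreover have "q = (if j + (n - k) < n then j + (n - k) else j + (n - k) - n)" unfolding q_def
      by (rule modk) (use nk j in auto)
    ultimately show ?thesis using nk j by (auto split: if_splits)
  qed
  define P1 where "P1 = (if (True, p) \<in> X then (2::nat, j) else (1, p))"
  define P2 where "P2 = (if (True, q) \<in> X then (2::nat, q) else (1, q))"
  have c0: "lab n k (1, j) \<in> edge_cut (gp_edges n k) X Y"
    using lab_cut[OF XY, of 1 j k] j allX yj by (simp add: ea_def eb_def)
  have c1: "lab n k P1 \<in> edge_cut (gp_edges n k) X Y"
  proof (cases "(True, p) \<in> X")
    case True
    then show ?thesis unfolding P1_def using lab_cut[OF XY, of 2 j k] j yj by (simp add: ea_def eb_def p_def)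
  next
    case False
    then show ?thesis unfolding P1_def using lab_cut[OF XY, of 1 p k] pn allX by (simp add: ea_def eb_def)
  qed
  have c2: "lab n k P2 \<in> edge_cut (gp_edges n k) X Y"
  proof (cases "(True, q) \<in> X")
    case True
    then show ?thesis unfolding P2_def using lab_cut[OF XY, of 2 q k] pn yj qk by (simp add: ea_def eb_def)
  next
    case False
    then show ?thesis unfolding P2_def using lab_cut[OF XY, of 1 q k] pn allX by (simp add: ea_def eb_def)
  qed
  show ?thesis
    by (rule three_pairs[OF nk _ _ _ _ _ _ c0 c1 c2])
       (use j pn pj qj pq in \<open>auto simp: P1_def P2_def\<close>)
qed

lemma exit_pt:
  assumes "P a" "\<not> P b" "a < n" "b < (n::nat)"
  shows "\<exists>i<n. P i \<and> \<not> P ((i+1) mod n)"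
proof (rule ccontr)
  assume h: "\<not> ?thesis"
  have all: "P ((a + m) mod n)" for m
  proof (induction m)
    case 0 then show ?case using assms by simp
  next
    case (Suc m)
    have "(a + m) mod n < n" using assms by simp
    then have "P (((a + m) mod n + 1) mod n)" using h Suc by blast
    moreover have "((a + m) mod n + 1) mod n = (a + Suc m) mod n" by (simp add: mod_Suc_eq)
    ultimately show ?case by simp
  qed
  have "(a + (b + n - a)) mod n = b" using assms by simp
  then show False using all[of "b + n - a"] assms by simp
qed

lemma cut_sym: "edge_cut E X Y = edge_cut E Y X"
  unfolding edge_cut_def by (auto simp: insert_commute)

lemma caseC:
  assumes nk: "3 \<le> n" "1 \<le> k" "2*k < n"
    and XY: "X \<union> Y = gp_vertices n" "X \<inter> Y = {}"
    and i: "i < n" "(False, i) \<in> X" "(False, (i+1) mod n) \<notin> X"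
    and j: "j < n" "(False, j) \<notin> X" "(False, (j+1) mod n) \<in> X"
  shows "3 \<le> card (edge_cut (gp_edges n k) X Y)"
proof -
  let ?B = "edge_cut (gp_edges n k) X Y"
  have kn: "k < n" using nk by simp
  define i' where "i' = (i + (n - k)) mod n"
  define i1 where "i1 = (i + 1) mod n"
  define i1' where "i1' = (i1 + (n - k)) mod n"
  have n0: "0 < n" using nk by simp
  have lt: "i' < n" "i1 < n" "i1' < n" unfolding i'_def i1_def i1'_def using n0 by auto
  have r1: "(i' + k) mod n = i" unfolding i'_def by (rule mod_back[OF kn i(1)])
  have r2: "(i1' + k) mod n = i1" unfolding i1'_def by (rule mod_back[OF kn lt(2)])
  have r3: "(i' + 1) mod n = i1'"
  proof -
    have "(i' + 1) mod n = (i + (n - k) + 1) mod n" unfolding i'_def by (simp add: mod_Suc_eq)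
    moreover have "i1' = (i + 1 + (n - k)) mod n" unfolding i1'_def i1_def by (simp add: mod_add_left_eq mod_Suc_eq)
    ultimately show ?thesis by (simp add: ac_simps)
  qed
  have ii': "i' \<noteq> i" unfolding i'_def by (rule modne) (use nk i in auto)
  have ij: "i \<noteq> j" using i j by auto
  have e0i: "lab n k (0, i) \<in> ?B" using lab_cut[OF XY, of 0 i k] i by (simp add: ea_def eb_def)
  have e0j: "lab n k (0, j) \<in> ?B" using lab_cut[OF XY, of 0 j k] j by (simp add: ea_def eb_def)
  let ?S = "{(1::nat, i), (1, i1), (1, i'), (1, i1'), (2, i'), (2, i1')}"
  show ?thesis
  proof (cases "\<exists>p\<in>?S. lab n k p \<in> ?B")
    case True
    then obtain p where p: "p \<in> ?S" "lab n k p \<in> ?B" by blast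
    have "p \<in> {0..<3} \<times> {0..<n}" "fst p \<noteq> 0" using p(1) lt i by auto
    then show ?thesis
      by (intro three_pairs[OF nk _ _ _ _ _ _ e0i e0j p(2)]) (use i j ij in auto)
  next
    case False
    then have nc: "\<And>p. p \<in> ?S \<Longrightarrow> lab n k p \<notin> ?B" by blast
    have a1: "(True, i) \<in> X" using nc[of "(1, i)"] lab_cut[OF XY, of 1 i k] i by (simp add: ea_def eb_def)
    have a2: "(True, i') \<in> X" using nc[of "(2, i')"] lab_cut[OF XY, of 2 i' k] lt a1 r1 by (simp add: ea_def eb_def)
    have a3: "(False, i') \<in> X" using nc[of "(1, i')"] lab_cut[OF XY, of 1 i' k] lt a2 by (simp add: ea_def eb_def)
    have b1: "(True, i1) \<notin> X" using nc[of "(1, i1)"] lab_cut[OF XY, of 1 i1 k] lt i(3) unfolding i1_def by (simp add: ea_def eb_def)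
    have b2: "(True, i1') \<notin> X" using nc[of "(2, i1')"] lab_cut[OF XY, of 2 i1' k] lt b1 r2 by (simp add: ea_def eb_def)
    have b3: "(False, i1') \<notin> X" using nc[of "(1, i1')"] lab_cut[OF XY, of 1 i1' k] lt b2 by (simp add: ea_def eb_def)
    have e3: "lab n k (0, i') \<in> ?B" using lab_cut[OF XY, of 0 i' k] lt a3 b3 r3 by (simp add: ea_def eb_def)
    have i'j: "i' \<noteq> j" using a3 j by auto
    show ?thesis
      by (rule three_pairs[OF nk _ _ _ _ _ _ e0i e0j e3]) (use i j ij ii' i'j lt in auto)
  qed
qed

lemma lower:
  assumes nk: "3 \<le> n" "1 \<le> k" "2*k < n"
    and XY: "X \<union> Y = gp_vertices n" "X \<inter> Y = {}" and ne: "X \<noteq> {}" "Y \<noteq> {}"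
  shows "3 \<le> card (edge_cut (gp_edges n k) X Y)"
proof (cases "\<forall>i<n. (False, i) \<in> X")
  case True
  then show ?thesis by (rule caseA[OF nk XY ne(2)])
next
  case nX: False
  show ?thesis
  proof (cases "\<forall>i<n. (False, i) \<in> Y")
    case True
    have XY': "Y \<union> X = gp_vertices n" "Y \<inter> X = {}" using XY by auto
    show ?thesis using caseA[OF nk XY' ne(1) True] cut_sym by metis
  next
    case False
    then obtain a where a: "a < n" "(False, a) \<notin> Y" by blast
    from nX obtain b where b: "b < n" "(False, b) \<notin> X" by blast
    have "(False, a) \<in> gp_vertices n" using a(1) by (simp add: gp_vertices_def)
    then have aX: "(False, a) \<in> X" using a(2) XY(1) by blast
    obtain i where i: "i < n" "(False, i) \<in> X" "(False, (i+1) mod n) \<notin> X"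
      using exit_pt[of "\<lambda>i. (False, i) \<in> X", OF aX b(2) a(1) b(1)] by blast
    obtain j where j: "j < n" "(False, j) \<notin> X" "(False, (j+1) mod n) \<in> X"
      using exit_pt[of "\<lambda>i. (False, i) \<notin> X", OF b(2) _ b(1) a(1)] aX by blast
    show ?thesis by (rule caseC[OF nk XY i j])
  qed
qed

lemma E0: "i + 1 < n \<Longrightarrow> {(False, i), (False, Suc i)} \<in> gp_edges n k"
  using lab_in[of 0 i n k] by (simp add: lab_def ea_def eb_def)
lemma E1: "i < n \<Longrightarrow> {(False, i), (True, i)} \<in> gp_edges n k"
  using lab_in[of 1 i n k] by (simp add: lab_def ea_def eb_def)
lemma E2: "i + k < n \<Longrightarrow> {(True, i), (True, i + k)} \<in> gp_edges n k"
  using lab_in[of 2 i n k] by (simp add: lab_def ea_def eb_def)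

lemma irI: "{a, b} \<in> E \<Longrightarrow> a \<in> X \<Longrightarrow> b \<in> X \<Longrightarrow> (a, b) \<in> ir E X"
  by (simp add: ir_def)
lemma irI': "{b, a} \<in> E \<Longrightarrow> a \<in> X \<Longrightarrow> b \<in> X \<Longrightarrow> (a, b) \<in> ir E X"
  by (simp add: ir_def insert_commute)

definition XX :: "nat \<Rightarrow> nat \<Rightarrow> (bool \<times> nat) set" where
  "XX m j = {v. (\<not> fst v \<and> snd v < m) \<or> (fst v \<and> snd v < j)}"

lemma constr:
  assumes nk: "3 \<le> n" "1 \<le> k" "2*k < n" and m: "1 \<le> m" "m \<le> n - k" and jm: "j \<le> k" "j \<le> m"
  defines "X \<equiv> XX m j" and "Y \<equiv> gp_vertices n - XX m j"
  shows "is_bond (gp_vertices n) (gp_edges n k) (edge_cut (gp_edges n k) X Y)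
         \<and> card (edge_cut (gp_edges n k) X Y) = m + j + 2"
proof -
  let ?E = "gp_edges n k"
  have mn: "m < n" using m nk by simp
  have XV: "X \<subseteq> gp_vertices n" unfolding X_def XX_def gp_vertices_def using mn jm by auto
  have XY: "X \<union> Y = gp_vertices n" "X \<inter> Y = {}" unfolding Y_def using XV X_def by auto
  have memX: "(False, l) \<in> X \<longleftrightarrow> l < m" "(True, l) \<in> X \<longleftrightarrow> l < j" for l
    unfolding X_def XX_def by auto
  have memY: "(False, l) \<in> Y \<longleftrightarrow> m \<le> l \<and> l < n" "(True, l) \<in> Y \<longleftrightarrow> j \<le> l \<and> l < n" for l
    unfolding Y_def XX_def gp_vertices_def by auto
  have cX: "induced_connected ?E X"
  proof (rule conn_intro[of "(False, 0)"])
    show "(False, 0) \<in> X" using memX m by simp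
    have F: "((False, l), (False, 0)) \<in> (ir ?E X)\<^sup>*" if "l < m" for l
      using that
    proof (induction l)
      case 0 then show ?case by simp
    next
      case (Suc l)
      have "((False, Suc l), (False, l)) \<in> ir ?E X"
        by (rule irI') (use E0[of l n k] Suc.prems mn memX in auto)
      then show ?case using Suc by (meson Suc_lessD converse_rtrancl_into_rtrancl)
    qed
    fix u assume u: "u \<in> X"
    obtain b l where ub: "u = (b, l)" by force
    show "(u, (False, 0)) \<in> (ir ?E X)\<^sup>*"
    proof (cases b)
      case False then show ?thesis using F u ub memX by auto
    next
      case True
      then have l: "l < j" using u ub memX by auto
      have "((True, l), (False, l)) \<in> ir ?E X"
        by (rule irI') (use E1[of l n k] l jm mn memX in auto)
      moreover have "((False, l), (False, 0)) \<in> (ir ?E X)\<^sup>*" using F[of l] l jm by simp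
      ultimately show ?thesis using ub True by (simp add: converse_rtrancl_into_rtrancl)
    qed
  qed
  have cY: "induced_connected ?E Y"
  proof (rule conn_intro[of "(False, n - 1)"])
    show "(False, n - 1) \<in> Y" using memY mn by simp
    have F: "((False, l), (False, n - 1)) \<in> (ir ?E Y)\<^sup>*" if "m \<le> l" "l < n" for l
    proof -
      have "l \<le> n - 1" using that by simp
      then show ?thesis
      proof (induction rule: inc_induct)
        case base then show ?case by simp
      next
        case (step q)
        have "((False, q), (False, Suc q)) \<in> ir ?E Y"
          by (rule irI) (use E0[of q n k] step.hyps that memY in auto)
        then show ?case using step.IH by (meson converse_rtrancl_into_rtrancl)
      qed
    qed
    have T: "\<forall>l. n - l \<le> d \<longrightarrow> j \<le> l \<longrightarrow> l < n \<longrightarrow> ((True, l), (False, n - 1)) \<in> (ir ?E Y)\<^sup>*" for d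
    proof (induction d)
      case 0 then show ?case by auto
    next
      case (Suc d)
      show ?case
      proof (intro allI impI)
        fix l assume l: "n - l \<le> Suc d" "j \<le> l" "l < n"
        show "((True, l), (False, n - 1)) \<in> (ir ?E Y)\<^sup>*"
        proof (cases "m \<le> l")
          case True
          have "((True, l), (False, l)) \<in> ir ?E Y"
            by (rule irI') (use E1[of l n k] l True memY in auto)
          then show ?thesis using F[OF True l(3)] by (meson converse_rtrancl_into_rtrancl)
        next
          case False
          have lk: "l + k < n" using False m by simp
          have "((True, l), (True, l + k)) \<in> ir ?E Y"
            by (rule irI) (use E2[OF lk] l lk memY in auto)
          moreover have "((True, l + k), (False, n - 1)) \<in> (ir ?E Y)\<^sup>*"
            using Suc.IH l lk nk by auto
          ultimately show ?thesis by (meson converse_rtrancl_into_rtrancl)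
        qed
      qed
    qed
    fix u assume u: "u \<in> Y"
    obtain b l where ub: "u = (b, l)" by force
    show "(u, (False, n - 1)) \<in> (ir ?E Y)\<^sup>*"
    proof (cases b)
      case False then show ?thesis using F u ub memY by auto
    next
      case True then show ?thesis using T[of "n - l"] u ub memY by auto
    qed
  qed
  have "(False, 0) \<in> X" using memX m by simp
  then have Xne: "X \<noteq> {}" by blast
  have "(False, n - 1) \<in> Y" using memY mn by simp
  then have Yne: "Y \<noteq> {}" by blast
  have bond: "is_bond (gp_vertices n) ?E (edge_cut ?E X Y)"
    unfolding is_bond_def by (intro exI[of _ X] exI[of _ Y]) (use Xne Yne XY cX cY in simp)
  let ?I = "{0..<3} \<times> {0..<n}"
  let ?cr = "\<lambda>p. (ea (fst p) (snd p) \<in> X) \<noteq> (eb n k (fst p) (snd p) \<in> X)"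
  have cut_eq: "edge_cut ?E X Y = lab n k ` {p \<in> ?I. ?cr p}"
  proof
    show "edge_cut ?E X Y \<subseteq> lab n k ` {p \<in> ?I. ?cr p}"
    proof
      fix e assume e: "e \<in> edge_cut ?E X Y"
      then have "e \<in> ?E" unfolding edge_cut_def by simp
      then obtain c l where cl: "c < 3" "l < n" "e = lab n k (c, l)" unfolding gp_edges_lab by auto
      then have "?cr (c, l)" using lab_cut[OF XY cl(1,2), of k] e by simp
      then show "e \<in> lab n k ` {p \<in> ?I. ?cr p}" using cl by force
    qed
  next
    show "lab n k ` {p \<in> ?I. ?cr p} \<subseteq> edge_cut ?E X Y"
    proof
      fix e assume "e \<in> lab n k ` {p \<in> ?I. ?cr p}"
      then obtain p where p: "p \<in> {p \<in> ?I. ?cr p}" "e = lab n k p" by blast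
      obtain c l where pcl: "p = (c, l)" by force
      have cl: "c < 3" "l < n" "e = lab n k (c, l)" "?cr (c, l)" using p pcl by auto
      then show "e \<in> edge_cut ?E X Y" using lab_cut[OF XY cl(1,2), of k] by simp
    qed
  qed
  define S where "S = (\<lambda>l. (0::nat, l)) ` {m - 1, n - 1} \<union> (\<lambda>l. (1, l)) ` {j..<m}
     \<union> (\<lambda>l. (2, l)) ` ({0..<j} \<union> {n - k..<n - k + j})"
  have S_eq: "{p \<in> ?I. ?cr p} = S"
  proof (rule set_eqI)
    fix p :: "nat \<times> nat"
    obtain c l where p: "p = (c, l)" by force
    have 1: "(1::nat) < n" using nk by simp
    show "p \<in> {p \<in> ?I. ?cr p} \<longleftrightarrow> p \<in> S"
    proof (cases "l < n")
      case False then show ?thesis unfolding S_def p using mn nk jm by auto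
    next
      case ln: True
      have m1: "(l + 1) mod n = (if l + 1 < n then l + 1 else l + 1 - n)" by (rule modk[OF 1 ln])
      have mk: "(l + k) mod n = (if l + k < n then l + k else l + k - n)" by (rule modk) (use nk ln in auto)
      have "c < 3 \<or> \<not> c < 3" by simp
      moreover have "c = 0 \<Longrightarrow> ?thesis"
      proof -
        assume c: "c = 0"
        have "?cr p = ((l < m) \<noteq> ((l + 1) mod n < m))" unfolding p c by (simp add: ea_def eb_def memX)
        also have "\<dots> = (l = m - 1 \<or> l = n - 1)" unfolding m1 using ln m mn by auto
        finally show ?thesis unfolding S_def using p c ln by auto
      qed
      moreover have "c = 1 \<Longrightarrow> ?thesis"
      proof -
        assume c: "c = 1"
        have "?cr p = ((l < m) \<noteq> (l < j))" unfolding p c by (simp add: ea_def eb_def memX)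
        also have "\<dots> = (j \<le> l \<and> l < m)" using jm by auto
        finally show ?thesis unfolding S_def using p c ln by auto
      qed
      moreover have "c = 2 \<Longrightarrow> ?thesis"
      proof -
        assume c: "c = 2"
        have "?cr p = ((l < j) \<noteq> ((l + k) mod n < j))" unfolding p c by (simp add: ea_def eb_def memX)
        also have "\<dots> = (l < j \<or> (n - k \<le> l \<and> l < n - k + j))" unfolding mk using ln jm nk by auto
        finally show ?thesis unfolding S_def using p c ln by auto
      qed
      moreover have "\<not> c < 3 \<Longrightarrow> ?thesis" unfolding S_def p by auto
      ultimately show ?thesis by linarith
    qed
  qed
  have cardS: "card S = m + j + 2"
  proof -
    have a: "card ((\<lambda>l. (0::nat, l)) ` {m - 1, n - 1}) = 2"
      using mn m by (subst card_image) (auto simp: inj_on_def)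
    have b: "card ((\<lambda>l. (1::nat, l)) ` {j..<m}) = m - j"
      by (subst card_image) (auto simp: inj_on_def)
    have c: "card ((\<lambda>l. (2::nat, l)) ` ({0..<j} \<union> {n - k..<n - k + j})) = j + j"
    proof -
      have "card ({0..<j} \<union> {n - k..<n - k + j}) = card {0..<j} + card {n - k..<n - k + j}"
        by (rule card_Un_disjoint) (use jm nk in auto)
      then show ?thesis by (subst card_image) (auto simp: inj_on_def)
    qed
    define A where "A = (\<lambda>l. (0::nat, l)) ` {m - 1, n - 1}"
    define B where "B = (\<lambda>l. (1::nat, l)) ` {j..<m}"
    define C where "C = (\<lambda>l. (2::nat, l)) ` ({0..<j} \<union> {n - k..<n - k + j})"
    have SA: "S = A \<union> B \<union> C" unfolding S_def A_def B_def C_def by simp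
    have fA: "finite A" "finite B" "finite C" unfolding A_def B_def C_def by auto
    have dAB: "A \<inter> B = {}" unfolding A_def B_def by auto
    have dABC: "(A \<union> B) \<inter> C = {}" unfolding A_def B_def C_def by auto
    have "card S = card A + card B + card C"
      unfolding SA using card_Un_disjoint[OF fA(1,2) dAB] card_Un_disjoint[of "A \<union> B" C] fA dABC by simp
    then have "card S = card ((\<lambda>l. (0::nat, l)) ` {m - 1, n - 1}) + card ((\<lambda>l. (1::nat, l)) ` {j..<m})
       + card ((\<lambda>l. (2::nat, l)) ` ({0..<j} \<union> {n - k..<n - k + j}))"
      unfolding A_def B_def C_def .
    then show ?thesis using a b c jm by simp
  qed
  have "card (edge_cut ?E X Y) = card {p \<in> ?I. ?cr p}"
    unfolding cut_eq by (rule card_image) (rule inj_on_subset[OF lab_inj[OF nk]], auto)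
  then show ?thesis using bond cardS S_eq by simp
qed

theorem theorem1p6:
  fixes n k :: nat
  assumes "n \<ge> 3" and "1 \<le> k" and "2 * k < n"
  shows "co_spectrum (gp_vertices n) (gp_edges n k) = {3..n + 2}"
proof
  have nk: "3 \<le> n" "1 \<le> k" "2 * k < n" using assms by auto
  show "co_spectrum (gp_vertices n) (gp_edges n k) \<subseteq> {3..n + 2}"
  proof
    fix s assume "s \<in> co_spectrum (gp_vertices n) (gp_edges n k)"
    then obtain B where s: "s = card B" and b: "is_bond (gp_vertices n) (gp_edges n k) B"
      unfolding co_spectrum_def by blast
    then obtain X Y where XY: "X \<noteq> {}" "Y \<noteq> {}" "X \<union> Y = gp_vertices n" "X \<inter> Y = {}"
      "induced_connected (gp_edges n k) X" "induced_connected (gp_edges n k) Y"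
      "B = edge_cut (gp_edges n k) X Y" unfolding is_bond_def by blast
    have "3 \<le> card B" using lower[OF nk XY(3,4,1,2)] XY(7) by simp
    moreover have "card B \<le> n + 2" using upper[OF XY(3,4,5,6)] XY(7) by simp
    ultimately show "s \<in> {3..n + 2}" using s by simp
  qed
next
  have nk: "3 \<le> n" "1 \<le> k" "2 * k < n" using assms by auto
  show "{3..n + 2} \<subseteq> co_spectrum (gp_vertices n) (gp_edges n k)"
  proof
    fix s assume s: "s \<in> {3..n + 2}"
    obtain m j where mj: "1 \<le> m" "m \<le> n - k" "j \<le> k" "j \<le> m" "s = m + j + 2"
    proof (cases "s - 2 \<le> n - k")
      case True
      show ?thesis by (rule that[of "s - 2" 0]) (use s True in auto)
    next
      case False
      show ?thesis by (rule that[of "n - k" "s - 2 - (n - k)"]) (use s False nk in auto)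
    qed
    have c: "is_bond (gp_vertices n) (gp_edges n k) (edge_cut (gp_edges n k) (XX m j) (gp_vertices n - XX m j))
         \<and> card (edge_cut (gp_edges n k) (XX m j) (gp_vertices n - XX m j)) = m + j + 2"
      by (rule constr[OF nk mj(1-4)])
    then show "s \<in> co_spectrum (gp_vertices n) (gp_edges n k)"
      unfolding co_spectrum_def using mj(5) by (metis (mono_tags, lifting) mem_Collect_eq)
  qed
qed

end
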